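(* Let $q>2$, $n>1$, and let $f:H(n,q)\to\mathbb{R}$ be an additive function with $|S(f)|\le 2(q-1)q^{n-2}$. Then one of the following holds: (1) $f\equiv 0$; (2) there exist $i\in\{1,\dots,n\}$, $k\in\{0,\dots,q-1\}$ and a constant $c\neq 0$ such that $f(x)=c$ for $x\in T_k(i,n)$ and $f(x)=0$ otherwise; (3) there exist $i\ne j$ in $\{1,\dots,n\}$, $k,m\in\{0,\dots,q-1\}$ and a constant $c\ne 0$ such that $f(x)=c$ for $x\in T_k(i,n)\setminus T_m(j,n)$, $f(x)=-c$ for $x\in T_m(j,n)\setminus T_k(i,n)$, and $f(x)=0$ otherwise.
   Context: The Hamming graph $H(N,q)$ has vertex set $\{0,1,\dots,q-1\}^N$, two words being adjacent iff they differ in exactly one coordinate. For $f:H(N,q)\to\mathbb{R}$, its support is $S(f)=\{x: f(x)\ne 0\}$. $T_k(i,N)$ denotes the set of vertices of $H(N,q)$ whose $i$-th coordinate equals $k$. For $f:H(N,q)\to\mathbb{R}$ ($N\ge1$), $i\in\{1,\dots,N\}$ and $k,m\in\{0,\dots,q-1\}$, define $g_{i,k,m}:H(N-1,q)\to\mathbb{R}$ by $g_{i,k,m}(t)=f(x)-f(y)$, where $x$ and $y$ are obtained from $t$ by inserting $k$, resp. $m$, as the $i$-th coordinate. The function $f$ is called additive if all functions $g_{i,k,m}$ are constant. *)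

theory Defs
  imports "HOL-Analysis.Analysis"
begin

text \<open>Vertices of the Hamming graph H(N,q): words of length N over {0..q-1}, represented
  as functions nat => nat with coordinates indexed 0..N-1 (coordinate i here is the paper's
  (i+1)-th coordinate), and value 0 outside {0..<N}.\<close>

definition hamming :: "nat \<Rightarrow> nat \<Rightarrow> (nat \<Rightarrow> nat) set" where
  "hamming N q = {x. (\<forall>i<N. x i < q) \<and> (\<forall>i\<ge>N. x i = 0)}"

definition supp :: "nat \<Rightarrow> nat \<Rightarrow> ((nat \<Rightarrow> nat) \<Rightarrow> real) \<Rightarrow> (nat \<Rightarrow> nat) set" where
  "supp N q f = {x \<in> hamming N q. f x \<noteq> 0}"

definition T :: "nat \<Rightarrow> nat \<Rightarrow> nat \<Rightarrow> nat \<Rightarrow> (nat \<Rightarrow> nat) set" where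
  "T q k i N = {x \<in> hamming N q. x i = k}"

definition ins_coord :: "nat \<Rightarrow> nat \<Rightarrow> (nat \<Rightarrow> nat) \<Rightarrow> (nat \<Rightarrow> nat)" where
  "ins_coord i k t = (\<lambda>j. if j < i then t j else if j = i then k else t (j - 1))"

definition g_fun :: "((nat \<Rightarrow> nat) \<Rightarrow> real) \<Rightarrow> nat \<Rightarrow> nat \<Rightarrow> nat \<Rightarrow> (nat \<Rightarrow> nat) \<Rightarrow> real" where
  "g_fun f i k m t = f (ins_coord i k t) - f (ins_coord i m t)"

definition additive :: "nat \<Rightarrow> nat \<Rightarrow> ((nat \<Rightarrow> nat) \<Rightarrow> real) \<Rightarrow> bool" where
  "additive N q f \<longleftrightarrow> (\<forall>i<N. \<forall>k<q. \<forall>m<q. \<exists>c. \<forall>t\<in>hamming (N - 1) q. g_fun f i k m t = c)"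

end

theory Submission imports Defs begin

definition hbox :: "nat \<Rightarrow> nat set \<Rightarrow> (nat \<Rightarrow> nat) set" where
  "hbox q K = {x. \<forall>l. (l \<in> K \<longrightarrow> x l < q) \<and> (l \<notin> K \<longrightarrow> x l = 0)}"

lemma hamming_box: "hamming N q = hbox q {..<N}"
  unfolding hamming_def hbox_def
proof (intro Collect_cong iffI allI conjI impI)
  fix x l assume "(\<forall>i<N. x i < q) \<and> (\<forall>i\<ge>N. x i = 0)"
  then show "l \<in> {..<N} \<Longrightarrow> x l < q" "l \<notin> {..<N} \<Longrightarrow> x l = 0" by auto
next
  fix x i assume "\<forall>l. (l \<in> {..<N} \<longrightarrow> x l < q) \<and> (l \<notin> {..<N} \<longrightarrow> x l = 0)"
  then show "i < N \<Longrightarrow> x i < q" "N \<le> i \<Longrightarrow> x i = 0" by auto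
qed

lemma hbox_image:
  assumes "i \<in> K"
  shows "hbox q K = (\<lambda>(x,k). x(i:=k)) ` (hbox q (K-{i}) \<times> {..<q})"
proof
  show "hbox q K \<subseteq> (\<lambda>(x,k). x(i:=k)) ` (hbox q (K-{i}) \<times> {..<q})"
  proof
    fix x assume x: "x \<in> hbox q K"
    have "x = (\<lambda>(y,k). y(i:=k)) (x(i:=0), x i)" by simp
    moreover have "(x(i:=0), x i) \<in> hbox q (K-{i}) \<times> {..<q}"
      using x assms unfolding hbox_def by auto
    ultimately show "x \<in> (\<lambda>(x,k). x(i:=k)) ` (hbox q (K-{i}) \<times> {..<q})" by blast
  qed
next
  show "(\<lambda>(x,k). x(i:=k)) ` (hbox q (K-{i}) \<times> {..<q}) \<subseteq> hbox q K"
  proof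
    fix z assume "z \<in> (\<lambda>(x,k). x(i:=k)) ` (hbox q (K-{i}) \<times> {..<q})"
    then obtain x k where x: "x \<in> hbox q (K-{i})" and k: "k \<in> {..<q}" and z: "z = x(i:=k)" by auto
    show "z \<in> hbox q K" unfolding hbox_def mem_Collect_eq z
    proof (intro allI)
      fix l show "(l \<in> K \<longrightarrow> (x(i:=k)) l < q) \<and> (l \<notin> K \<longrightarrow> (x(i:=k)) l = 0)"
        using x k assms unfolding hbox_def by (cases "l = i") auto
    qed
  qed
qed

lemma hbox_inj: "inj_on (\<lambda>(x,k). x(i:=k)) (hbox q (K-{i}) \<times> {..<q})"
proof (rule inj_onI, clarify)
  fix x k y m
  assume x: "x \<in> hbox q (K-{i})" and y: "y \<in> hbox q (K-{i})" and e: "x(i:=k) = y(i:=m)"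
  have "x i = 0" "y i = 0" using x y unfolding hbox_def by auto
  have "k = m" using fun_cong[OF e, of i] by simp
  moreover have "x = y"
  proof
    fix l show "x l = y l" using fun_cong[OF e, of l] \<open>x i = 0\<close> \<open>y i = 0\<close>
      by (cases "l = i") auto
  qed
  ultimately show "x = y \<and> k = m" by simp
qed

lemma hbox_empty: "hbox q {} = {\<lambda>_. 0}"
  unfolding hbox_def by auto

lemma finite_box: "finite K \<Longrightarrow> finite (hbox q K)"
proof (induction K rule: finite_induct)
  case empty then show ?case by (simp add: hbox_empty)
next
  case (insert i K)
  have "insert i K - {i} = K" using insert by auto
  then show ?case using hbox_image[of i "insert i K" q] insert by simp
qed

lemma hbox_sum:
  assumes "finite K" "i \<in> K"
  shows "(\<Sum>x\<in>hbox q K. F x) = (\<Sum>x\<in>hbox q (K-{i}). \<Sum>k<q. F (x(i:=k)))"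
proof -
  have "(\<Sum>x\<in>hbox q K. F x) = (\<Sum>p\<in>hbox q (K-{i}) \<times> {..<q}. F ((\<lambda>(x,k). x(i:=k)) p))"
    by (subst hbox_image[OF assms(2)], rule sum.reindex[OF hbox_inj, unfolded comp_def])
  also have "\<dots> = (\<Sum>x\<in>hbox q (K-{i}). \<Sum>k<q. F (x(i:=k)))"
    by (simp add: sum.cartesian_product split_def)
  finally show ?thesis .
qed

lemma card_filter_sum: "finite A \<Longrightarrow> card {x\<in>A. P x} = (\<Sum>x\<in>A. if P x then 1 else 0)"
  by (simp add: sum.If_cases Int_def conj_commute)

lemma hbox_card_filter:
  assumes "finite K" "i \<in> K"
  shows "card {x\<in>hbox q K. P x} = (\<Sum>x\<in>hbox q (K-{i}). card {k\<in>{..<q}. P (x(i:=k))})"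
proof -
  have "\<And>x. card {k\<in>{..<q}. P (x(i:=k))} = (\<Sum>k<q. if P (x(i:=k)) then 1 else 0)"
    by (rule card_filter_sum) simp
  moreover have "card {x\<in>hbox q K. P x} = (\<Sum>x\<in>hbox q K. if P x then 1 else 0)"
    by (rule card_filter_sum) (simp add: finite_box assms)
  ultimately show ?thesis using hbox_sum[OF assms, where F="\<lambda>x. if P x then 1 else 0" and q=q]
    by simp
qed

lemma card_box: "finite K \<Longrightarrow> card (hbox q K) = q ^ card K"
proof (induction K rule: finite_induct)
  case empty then show ?case by (simp add: hbox_empty)
next
  case (insert i K)
  have "insert i K - {i} = K" using insert by auto
  have "card (hbox q (insert i K)) = (\<Sum>x\<in>hbox q K. \<Sum>k<q. (1::nat))"
    using hbox_sum[of "insert i K" i "\<lambda>_. 1::nat" q] insert \<open>insert i K - {i} = K\<close> by simp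
  then show ?case using insert by simp
qed


definition G :: "(nat \<Rightarrow> nat \<Rightarrow> real) \<Rightarrow> nat \<Rightarrow> real \<Rightarrow> (nat \<Rightarrow> nat) \<Rightarrow> real" where
  "G a n c x = c + (\<Sum>l<n. a l (x l))"

lemma G_upd:
  assumes "i < n" "x i = 0" "a i 0 = 0"
  shows "G a n c (x(i:=k)) = G a n c x + a i k"
proof -
  have "(\<Sum>l<n. a l ((x(i:=k)) l)) = a i k + (\<Sum>l\<in>{..<n}-{i}. a l ((x(i:=k)) l))"
    using assms by (simp add: sum.remove)
  also have "(\<Sum>l\<in>{..<n}-{i}. a l ((x(i:=k)) l)) = (\<Sum>l\<in>{..<n}-{i}. a l (x l))"
    by (rule sum.cong) auto
  also have "\<dots> = (\<Sum>l<n. a l (x l))"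
    using assms by (simp add: sum.remove)
  finally show ?thesis unfolding G_def by simp
qed

lemma box_i0: "x \<in> hbox q K \<Longrightarrow> i \<notin> K \<Longrightarrow> x i = 0"
  unfolding hbox_def by auto

lemma G_fiber:
  assumes "finite K" "K \<subseteq> {..<n}" "i \<in> K" "a i 0 = 0"
  shows "card {x\<in>hbox q K. G a n c x = w}
     = (\<Sum>y\<in>hbox q (K-{i}). card {k\<in>{..<q}. a i k = w - G a n c y})"
proof -
  have "card {x\<in>hbox q K. G a n c x = w}
     = (\<Sum>y\<in>hbox q (K-{i}). card {k\<in>{..<q}. G a n c (y(i:=k)) = w})"
    by (rule hbox_card_filter[OF assms(1,3)])
  also have "\<dots> = (\<Sum>y\<in>hbox q (K-{i}). card {k\<in>{..<q}. a i k = w - G a n c y})"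
  proof (rule sum.cong[OF refl])
    fix y assume y: "y \<in> hbox q (K-{i})"
    have "y i = 0" using box_i0[OF y] by simp
    then have "\<And>k. G a n c (y(i:=k)) = G a n c y + a i k"
      using G_upd assms by auto
    then show "card {k\<in>{..<q}. G a n c (y(i:=k)) = w} = card {k\<in>{..<q}. a i k = w - G a n c y}"
      by (intro arg_cong[where f=card] Collect_cong) auto
  qed
  finally show ?thesis .
qed

lemma card_less_minus1:
  assumes "ka < q" "a 0 = (0::real)" "a ka \<noteq> 0"
  shows "card {k\<in>{..<q}. a k = u} \<le> q - 1"
proof (cases "a 0 = u")
  case True
  then have "{k\<in>{..<q}. a k = u} \<subseteq> {..<q} - {ka}" using assms by auto
  then show ?thesis using card_mono[of "{..<q} - {ka}"] assms by fastforce
next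
  case False
  then have "{k\<in>{..<q}. a k = u} \<subseteq> {..<q} - {0}" by auto
  then show ?thesis using card_mono[of "{..<q} - {0}"] assms by fastforce
qed

lemma claimA:
  assumes "finite K" "K \<subseteq> {..<n}" "i \<in> K" "a i 0 = 0" "ka < q" "a i ka \<noteq> 0"
  shows "card {x\<in>hbox q K. G a n c x = w} \<le> (q-1) * q^(card K - 1)"
proof -
  have "card {x\<in>hbox q K. G a n c x = w}
     = (\<Sum>y\<in>hbox q (K-{i}). card {k\<in>{..<q}. a i k = w - G a n c y})"
    using G_fiber[where K=K and n=n and i=i and a=a and q=q and c=c and w=w] assms by simp
  also have "\<dots> \<le> (\<Sum>y\<in>hbox q (K-{i}). q - 1)"
    by (rule sum_mono, rule card_less_minus1[OF assms(5,4,6)])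
  also have "\<dots> = (q-1) * q^(card K - 1)"
    using assms(1,3) by (simp add: card_box)
  finally show ?thesis .
qed

lemma arithB_int:
  fixes p M s Q S :: int
  assumes "p \<ge> 2" "0 \<le> M" "M \<le> p" "0 \<le> s" "s \<le> p*Q" "0 \<le> Q"
    "S \<le> s*M + ((p+1)*Q - s)*(p+1-M)" "S \<le> (p+1)*Q*M"
  shows "S \<le> (p*p+1)*Q"
proof (cases "2*M \<le> p+1")
  case True
  have "(p+1)*(2*M) \<le> (p+1)*(p+1)" using True assms(1) by (intro mult_left_mono) auto
  moreover have "(p+1)*(p+1) \<le> 2*(p*p+1)"
  proof -
    have "0 \<le> (p-1)*(p-1)" by simp
    then show ?thesis by (simp add: algebra_simps)
  qed
  ultimately have "(p+1)*M \<le> p*p+1" by (simp add: algebra_simps)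
  then have "(p+1)*M*Q \<le> (p*p+1)*Q" using assms(6) by (rule mult_right_mono)
  then show ?thesis using assms(8) by (simp add: algebra_simps)
next
  case False
  have e1: "s*M + ((p+1)*Q - s)*(p+1-M) = s*(2*M-p-1) + (p+1)*Q*(p+1-M)"
    by (simp add: algebra_simps)
  have "s*(2*M-p-1) \<le> (p*Q)*(2*M-p-1)" using False assms(5) by (intro mult_right_mono) auto
  moreover have "(p*Q)*(2*M-p-1) + (p+1)*Q*(p+1-M) = Q*((p-1)*M + (p+1))"
    by (simp add: algebra_simps)
  moreover have "(p-1)*M \<le> (p-1)*p" using assms by (intro mult_left_mono) auto
  then have "Q*((p-1)*M + (p+1)) \<le> Q*((p-1)*p + (p+1))" using assms(6) by (intro mult_left_mono) auto
  moreover have "Q*((p-1)*p + (p+1)) = (p*p+1)*Q" by (simp add: algebra_simps)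
  ultimately show ?thesis using assms(7) e1 by linarith
qed

lemma arithC_int:
  fixes p M s Q S :: int
  assumes "p \<ge> 2" "0 \<le> M" "M \<le> p" "0 \<le> s" "s \<le> (p*p+1)*Q" "1 \<le> Q"
    "S \<le> s*M + ((p+1)*(p+1)*Q - s)*(p+1-M)" "S \<le> (p+1)*(p+1)*Q*M"
  shows "S < (p*p+1)*(p+1)*Q"
proof (cases "2*M \<le> p+1")
  case True
  have "(p+1)*(2*M) \<le> (p+1)*(p+1)" using True assms(1) by (intro mult_left_mono) auto
  moreover have "(p+1)*(p+1) < 2*(p*p+1)"
  proof -
    have "0 < (p-1)*(p-1)" using assms(1) by simp
    then show ?thesis by (simp add: algebra_simps)
  qed
  ultimately have "(p+1)*M < p*p+1" by (simp add: algebra_simps)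
  then have "((p+1)*Q)*((p+1)*M) < ((p+1)*Q)*(p*p+1)" using assms by (intro mult_strict_left_mono) auto
  then show ?thesis using assms(8) by (simp add: algebra_simps)
next
  case False
  have e1: "s*M + ((p+1)*(p+1)*Q - s)*(p+1-M) = s*(2*M-p-1) + (p+1)*(p+1)*Q*(p+1-M)"
    by (simp add: algebra_simps)
  have "s*(2*M-p-1) \<le> ((p*p+1)*Q)*(2*M-p-1)" using False assms(5) by (intro mult_right_mono) auto
  moreover have "(p+1)*(p+1) < 2*(p*p+1)"
  proof -
    have "0 < (p-1)*(p-1)" using assms(1) by simp
    then show ?thesis by (simp add: algebra_simps)
  qed
  then have "((p+1)*(p+1))*(Q*(p+1-M)) < (2*(p*p+1))*(Q*(p+1-M))"
    using assms by (intro mult_strict_right_mono) auto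
  moreover have "((p*p+1)*Q)*(2*M-p-1) + (2*(p*p+1))*(Q*(p+1-M)) = (p*p+1)*(p+1)*Q"
    by (simp add: algebra_simps)
  ultimately show ?thesis using assms(7) e1 by (simp add: algebra_simps)
qed

lemma arithB:
  fixes p M s Q S :: nat
  assumes "p \<ge> 2" "M \<le> p" "s \<le> p*Q" "S \<le> s*M + ((p+1)*Q - s)*(p+1-M)" "S \<le> (p+1)*Q*M"
  shows "S \<le> (p*p+1)*Q"
proof -
  have sP: "s \<le> (p+1)*Q" using assms(3) by (simp add: algebra_simps)
  have d1: "int ((p+1)*Q - s) = (int p+1)*int Q - int s" using of_nat_diff[OF sP, where 'a=int] by (simp add: algebra_simps)
  have d2: "int (p+1-M) = int p+1-int M" using assms(2) by (simp add: of_nat_diff)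
  have "int S \<le> int (s*M + ((p+1)*Q - s)*(p+1-M))" by (subst of_nat_le_iff) (rule assms(4))
  also have "\<dots> = int s*int M + ((int p+1)*int Q - int s)*(int p+1-int M)"
    using d1 d2 by (metis of_nat_add of_nat_mult)
  finally have "int S \<le> int s*int M + ((int p+1)*int Q - int s)*(int p+1-int M)" .
  moreover have "int s \<le> int (p*Q)" using assms(3) by (simp only: of_nat_le_iff)
  moreover have "int S \<le> int ((p+1)*Q*M)" using assms(5) by (simp only: of_nat_le_iff)
  ultimately have "int S \<le> (int p*int p+1)*int Q"
    by (intro arithB_int[rotated 6]) (use assms in \<open>auto simp: algebra_simps\<close>)
  then have "int S \<le> int ((p*p+1)*Q)" by (simp add: algebra_simps)
  then show ?thesis by (simp only: of_nat_le_iff)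
qed

lemma arithC:
  fixes p M s Q S :: nat
  assumes "p \<ge> 2" "M \<le> p" "s \<le> (p*p+1)*Q" "1 \<le> Q"
    "S \<le> s*M + ((p+1)*(p+1)*Q - s)*(p+1-M)" "S \<le> (p+1)*(p+1)*Q*M"
  shows "S < (p*p+1)*(p+1)*Q"
proof -
  have sP: "s \<le> (p+1)*(p+1)*Q" using assms(3) by (simp add: algebra_simps)
  have d1: "int ((p+1)*(p+1)*Q - s) = (int p+1)*(int p+1)*int Q - int s" using of_nat_diff[OF sP, where 'a=int] by (simp add: algebra_simps)
  have d2: "int (p+1-M) = int p+1-int M" using assms(2) by (simp add: of_nat_diff)
  have "int S \<le> int (s*M + ((p+1)*(p+1)*Q - s)*(p+1-M))" by (subst of_nat_le_iff) (rule assms(5))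
  also have "\<dots> = int s*int M + ((int p+1)*(int p+1)*int Q - int s)*(int p+1-int M)"
    using d1 d2 by (metis of_nat_add of_nat_mult)
  finally have "int S \<le> int s*int M + ((int p+1)*(int p+1)*int Q - int s)*(int p+1-int M)" .
  moreover have "int s \<le> int ((p*p+1)*Q)" using assms(3) by (simp only: of_nat_le_iff)
  moreover have "int S \<le> int ((p+1)*(p+1)*Q*M)" using assms(6) by (simp only: of_nat_le_iff)
  ultimately have "int S < (int p*int p+1)*(int p+1)*int Q"
    by (intro arithC_int[rotated 6]) (use assms in \<open>auto simp: algebra_simps\<close>)
  then have "int S < int ((p*p+1)*(p+1)*Q)" by (simp add: algebra_simps)
  then show ?thesis by (simp only: of_nat_less_iff)
qed


lemma mode_exists:
  fixes \<phi> :: "nat \<Rightarrow> real"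
  assumes "q > 0"
  shows "\<exists>u0. \<forall>u. card {k\<in>{..<q}. \<phi> k = u} \<le> card {k\<in>{..<q}. \<phi> k = u0}"
proof -
  define N where "N u = card {k\<in>{..<q}. \<phi> k = u}" for u
  have fin: "finite (N ` \<phi> ` {..<q})" by simp
  have ne: "N ` \<phi> ` {..<q} \<noteq> {}" using assms by auto
  have "Max (N ` \<phi> ` {..<q}) \<in> N ` (\<phi> ` {..<q})" by (rule Max_in[OF fin ne])
  then have "\<exists>u0\<in>\<phi> ` {..<q}. Max (N ` \<phi> ` {..<q}) = N u0" by (simp only: image_iff)
  then obtain u0 where u0: "u0 \<in> \<phi> ` {..<q}" "N u0 = Max (N ` \<phi> ` {..<q})" by metis
  have "N u \<le> N u0" for u
  proof (cases "u \<in> \<phi> ` {..<q}")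
    case True then show ?thesis using u0(2) Max_ge[OF fin] by auto
  next
    case False
    then have "{k\<in>{..<q}. \<phi> k = u} = {}" by auto
    then show ?thesis unfolding N_def by (metis card.empty zero_le)
  qed
  then show ?thesis unfolding N_def by blast
qed

lemma two_values:
  fixes \<phi> :: "nat \<Rightarrow> real"
  assumes "u \<noteq> u0"
  shows "card {k\<in>{..<q}. \<phi> k = u} + card {k\<in>{..<q}. \<phi> k = u0} \<le> q"
proof -
  have "card {k\<in>{..<q}. \<phi> k = u} + card {k\<in>{..<q}. \<phi> k = u0}
      = card ({k\<in>{..<q}. \<phi> k = u} \<union> {k\<in>{..<q}. \<phi> k = u0})"
    using assms by (intro card_Un_disjoint[symmetric]) auto
  also have "\<dots> \<le> card {..<q}" by (rule card_mono) auto
  finally show ?thesis by simp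
qed

lemma split_sum_bound:
  fixes h :: "'a \<Rightarrow> nat"
  assumes "finite Y" "\<And>y. y \<in> Y \<Longrightarrow> h y \<le> M" "\<And>y. y \<in> Y \<Longrightarrow> \<not> P y \<Longrightarrow> h y \<le> R"
  shows "sum h Y \<le> card {y\<in>Y. P y} * M + (card Y - card {y\<in>Y. P y}) * R"
proof -
  let ?A = "{y\<in>Y. P y}"
  have sub: "?A \<subseteq> Y" by auto
  have "sum h Y = sum h (Y - ?A) + sum h ?A" by (rule sum.subset_diff[OF sub assms(1)])
  also have "sum h ?A \<le> card ?A * M" using sum_bounded_above[of ?A h M] assms(2) by auto
  also have "sum h (Y - ?A) \<le> card (Y - ?A) * R" using sum_bounded_above[of "Y - ?A" h R] assms(3) by auto
  also have "card (Y - ?A) = card Y - card ?A" using assms(1) sub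
    by (simp add: card_Diff_subset finite_subset)
  finally show ?thesis by simp
qed

lemma fiber_bound:
  assumes "finite K" "K \<subseteq> {..<n}" "i \<in> K" "a i 0 = 0" "kk < q" "a i kk \<noteq> 0"
  shows "\<exists>u0 M. M \<le> q - 1 \<and>
     card {x\<in>hbox q K. G a n c x = w} \<le> card {y\<in>hbox q (K-{i}). G a n c y = w - u0} * M
        + (card (hbox q (K-{i})) - card {y\<in>hbox q (K-{i}). G a n c y = w - u0}) * (q - M)
     \<and> card {x\<in>hbox q K. G a n c x = w} \<le> card (hbox q (K-{i})) * M"
proof -
  obtain u0 where u0: "\<And>u. card {k\<in>{..<q}. a i k = u} \<le> card {k\<in>{..<q}. a i k = u0}"
    using mode_exists[of q "a i"] assms(5) by auto
  define M where "M = card {k\<in>{..<q}. a i k = u0}"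
  define Y where "Y = hbox q (K-{i})"
  define h where "h y = card {k\<in>{..<q}. a i k = w - G a n c y}" for y
  have cnt: "card {x\<in>hbox q K. G a n c x = w} = sum h Y"
    unfolding h_def Y_def
    using G_fiber[where K=K and n=n and i=i and a=a and q=q and c=c and w=w] assms by simp
  have finY: "finite Y" unfolding Y_def using assms(1) by (simp add: finite_box)
  have hM: "h y \<le> M" for y unfolding h_def M_def by (rule u0)
  have hR: "h y \<le> q - M" if "\<not> G a n c y = w - u0" for y
  proof -
    have "w - G a n c y \<noteq> u0" using that by auto
    from two_values[OF this, of q "a i"] show ?thesis unfolding h_def M_def by simp
  qed
  have "sum h Y \<le> card {y\<in>Y. G a n c y = w - u0} * M + (card Y - card {y\<in>Y. G a n c y = w - u0}) * (q - M)"
    by (rule split_sum_bound[OF finY]) (use hM hR in auto)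
  moreover have "sum h Y \<le> card Y * M" using sum_bounded_above[of Y h M] hM by auto
  moreover have "M \<le> q - 1" unfolding M_def by (rule card_less_minus1[OF assms(5,4,6)])
  ultimately show ?thesis using cnt unfolding Y_def by auto
qed

lemma claimB:
  assumes "finite K" "K \<subseteq> {..<n}" "i \<in> K" "j \<in> K" "i \<noteq> j"
    "a i 0 = 0" "ka < q" "a i ka \<noteq> 0" "a j 0 = 0" "kb < q" "a j kb \<noteq> 0" "q \<ge> 3"
  shows "card {x\<in>hbox q K. G a n c x = w} \<le> ((q-1)*(q-1)+1) * q^(card K - 2)"
proof -
  obtain u0 M where M: "M \<le> q - 1" and
    b1: "card {x\<in>hbox q K. G a n c x = w} \<le> card {y\<in>hbox q (K-{i}). G a n c y = w - u0} * M
        + (card (hbox q (K-{i})) - card {y\<in>hbox q (K-{i}). G a n c y = w - u0}) * (q - M)" and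
    b2: "card {x\<in>hbox q K. G a n c x = w} \<le> card (hbox q (K-{i})) * M"
    using fiber_bound[where K=K and n=n and i=i and a=a and kk=ka and q=q and c=c and w=w] assms by blast
  have "{i,j} \<subseteq> K" using assms by auto
  then have cK: "card K \<ge> 2" using card_mono[OF assms(1), of "{i,j}"] assms by simp
  have s: "card {y\<in>hbox q (K-{i}). G a n c y = w - u0} \<le> (q-1) * q^(card (K-{i}) - 1)"
    by (rule claimA[where i=j and ka=kb]) (use assms in auto)
  define p where "p = q - 1"
  define Q where "Q = q^(card K - 2)"
  have qp: "q = p + 1" unfolding p_def using assms by simp
  have e1: "card (K-{i}) - 1 = card K - 2" using assms by simp
  have e2: "card (hbox q (K-{i})) = (p+1) * Q"
  proof -
    have "card (hbox q (K-{i})) = q^(card K - 1)" using assms by (simp add: card_box)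
    also have "card K - 1 = Suc (card K - 2)" using cK by simp
    finally show ?thesis unfolding Q_def qp by simp
  qed
  have p2: "2 \<le> q - 1" using assms by simp
  show ?thesis
    unfolding Q_def[symmetric] qp
    by (rule arithB[where M=M and s="card {y\<in>hbox q (K-{i}). G a n c y = w - u0}"])
       (use assms M s b1 b2 e1 e2 p2 in \<open>auto simp: p_def Q_def\<close>)
qed


lemma claimC:
  assumes "finite K" "K \<subseteq> {..<n}" "i \<in> K" "j \<in> K" "l \<in> K" "i \<noteq> j" "i \<noteq> l" "j \<noteq> l"
    "a i 0 = 0" "ka < q" "a i ka \<noteq> 0" "a j 0 = 0" "kb < q" "a j kb \<noteq> 0"
    "a l 0 = 0" "kc < q" "a l kc \<noteq> 0" "q \<ge> 3"
  shows "card {x\<in>hbox q K. G a n c x = w} < ((q-1)*(q-1)+1) * q^(card K - 2)"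
proof -
  obtain u0 M where M: "M \<le> q - 1" and
    b1: "card {x\<in>hbox q K. G a n c x = w} \<le> card {y\<in>hbox q (K-{i}). G a n c y = w - u0} * M
        + (card (hbox q (K-{i})) - card {y\<in>hbox q (K-{i}). G a n c y = w - u0}) * (q - M)" and
    b2: "card {x\<in>hbox q K. G a n c x = w} \<le> card (hbox q (K-{i})) * M"
    using fiber_bound[where K=K and n=n and i=i and a=a and kk=ka and q=q and c=c and w=w] assms by blast
  have "{i,j,l} \<subseteq> K" using assms by auto
  then have cK: "card K \<ge> 3" using card_mono[OF assms(1), of "{i,j,l}"] assms by simp
  have s: "card {y\<in>hbox q (K-{i}). G a n c y = w - u0} \<le> ((q-1)*(q-1)+1) * q^(card (K-{i}) - 2)"
    by (rule claimB[where i=j and j=l and ka=kb and kb=kc]) (use assms in auto)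
  define p where "p = q - 1"
  define Q where "Q = q^(card K - 3)"
  have qp: "q = p + 1" unfolding p_def using assms by simp
  have e1: "card (K-{i}) - 2 = card K - 3" using assms by simp
  have e2: "card (hbox q (K-{i})) = (p+1) * (p+1) * Q"
  proof -
    have "card (hbox q (K-{i})) = q^(card K - 1)" using assms by (simp add: card_box)
    also have "card K - 1 = Suc (Suc (card K - 3))" using cK by simp
    finally have "card (hbox q (K-{i})) = q * q * q^(card K - 3)" by (simp add: mult.assoc)
    then show ?thesis unfolding Q_def by (metis qp)
  qed
  have e3: "q^(card K - 2) = (p+1)*Q"
  proof -
    have "card K - 2 = Suc (card K - 3)" using cK by simp
    then show ?thesis unfolding Q_def qp by simp
  qed
  have Q1: "1 \<le> Q" unfolding Q_def using assms by simp
  have p2: "2 \<le> q - 1" using assms by simp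
  have pp: "2 \<le> p" "M \<le> p" using p2 M unfolding p_def by auto
  have s': "card {y\<in>hbox q (K-{i}). G a n c y = w - u0} \<le> (p*p+1)*Q"
    using s unfolding e1 p_def[symmetric] Q_def .
  have b1': "card {x\<in>hbox q K. G a n c x = w} \<le> card {y\<in>hbox q (K-{i}). G a n c y = w - u0} * M
        + ((p+1)*(p+1)*Q - card {y\<in>hbox q (K-{i}). G a n c y = w - u0}) * (p + 1 - M)"
    using b1 unfolding e2 by (simp only: qp)
  have b2': "card {x\<in>hbox q K. G a n c x = w} \<le> (p+1)*(p+1)*Q*M"
    using b2 unfolding e2 .
  have "card {x\<in>hbox q K. G a n c x = w} < (p*p+1)*(p+1)*Q"
    by (rule arithC[OF pp s' Q1 b1' b2'])
  then show ?thesis unfolding e3 p_def[symmetric] by (simp only: mult.assoc)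
qed


lemma hamI: "(\<And>i. i < N \<Longrightarrow> x i < q) \<Longrightarrow> (\<And>i. N \<le> i \<Longrightarrow> x i = 0) \<Longrightarrow> x \<in> hamming N q"
  unfolding hamming_def by blast
lemma hamD1: "x \<in> hamming N q \<Longrightarrow> i < N \<Longrightarrow> x i < q"
  unfolding hamming_def by blast
lemma hamD2: "x \<in> hamming N q \<Longrightarrow> N \<le> i \<Longrightarrow> x i = 0"
  unfolding hamming_def by blast

definition tr :: "(nat \<Rightarrow> nat) \<Rightarrow> nat \<Rightarrow> (nat \<Rightarrow> nat)" where
  "tr x L = (\<lambda>j. if j < L then x j else 0)"

lemma decomp:
  assumes "additive n q f" "q > 0"
  shows "\<exists>a. (\<forall>l. a l 0 = 0) \<and> (\<forall>x\<in>hamming n q. f x = G a n (f (\<lambda>_. 0)) x)"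
proof -
  define a where "a l k = (if l < n \<and> k < q then (SOME c. \<forall>t\<in>hamming (n-1) q. g_fun f l k 0 t = c) else 0)" for l k
  have ha: "g_fun f l k 0 t = a l k" if "l < n" "k < q" "t \<in> hamming (n-1) q" for l k t
  proof -
    have "\<exists>c. \<forall>t\<in>hamming (n-1) q. g_fun f l k 0 t = c"
      using assms that unfolding additive_def by blast
    then have "\<forall>t\<in>hamming (n-1) q. g_fun f l k 0 t = (SOME c. \<forall>t\<in>hamming (n-1) q. g_fun f l k 0 t = c)"
      by (rule someI_ex)
    then have "g_fun f l k 0 t = (SOME c. \<forall>t\<in>hamming (n-1) q. g_fun f l k 0 t = c)"
      using that(3) by (rule bspec)
    moreover have "a l k = (SOME c. \<forall>t\<in>hamming (n-1) q. g_fun f l k 0 t = c)"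
      unfolding a_def using that(1,2) by simp
    ultimately show ?thesis by simp
  qed
  have t0: "(\<lambda>_. 0) \<in> hamming (n-1) q" using assms(2) by (intro hamI) auto
  have a0: "a l 0 = 0" for l
  proof (cases "l < n")
    case True
    have "g_fun f l 0 0 (\<lambda>_. 0) = 0" unfolding g_fun_def by simp
    then show ?thesis using ha[OF True assms(2) t0] by simp
  next
    case False then show ?thesis unfolding a_def by simp
  qed
  have step: "f (tr x L) = f (\<lambda>_. 0) + (\<Sum>l<L. a l (x l))" if x: "x \<in> hamming n q" for x L
    using that
  proof (induction L)
    case 0
    have "tr x 0 = (\<lambda>_. 0)" unfolding tr_def by simp
    then show ?case by simp
  next
    case (Suc L)
    show ?case
    proof (cases "L < n")
      case True
      have tH: "tr x L \<in> hamming (n-1) q"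
      proof (rule hamI)
        fix i assume "i < n - 1" then show "tr x L i < q" using hamD1[OF x, of i] assms(2) unfolding tr_def by auto
      next
        fix i assume "n - 1 \<le> i" then show "tr x L i = 0" using True unfolding tr_def by auto
      qed
      have e1: "ins_coord L (x L) (tr x L) = tr x (Suc L)"
        unfolding ins_coord_def tr_def by (rule ext, rename_tac j, case_tac "j < L"; case_tac "j = L") auto
      have e2: "ins_coord L 0 (tr x L) = tr x L"
        unfolding ins_coord_def tr_def by (rule ext) auto
      have xL: "x L < q" using hamD1[OF x True] .
      have "f (tr x (Suc L)) - f (tr x L) = a L (x L)"
        using ha[OF True xL tH] unfolding g_fun_def e1 e2 .
      then show ?thesis using Suc by simp
    next
      case False
      have xL: "x L = 0" using hamD2[OF x] False by simp
      have e: "tr x (Suc L) = tr x L"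
        using xL unfolding tr_def by (intro ext) (auto simp: less_Suc_eq)
      have "a L (x L) = 0" using xL a0 by simp
      then show ?thesis using Suc e by simp
    qed
  qed
  have "f x = G a n (f (\<lambda>_. 0)) x" if x: "x \<in> hamming n q" for x
  proof -
    have "tr x n = x" using hamD2[OF x] unfolding tr_def by (intro ext) auto
    then show ?thesis using step[OF x, of n] unfolding G_def by simp
  qed
  then show ?thesis using a0 by blast
qed

lemma sum_if_point:
  fixes F :: "real \<Rightarrow> nat"
  assumes "k0 < q"
  shows "(\<Sum>k<q. F (if k = k0 then X else Y)) = F X + (q-1) * F Y"
proof -
  have "(\<Sum>k<q. F (if k = k0 then X else Y)) = F X + (\<Sum>k\<in>{..<q}-{k0}. F (if k = k0 then X else Y))"
    using assms by (simp add: sum.remove)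
  also have "(\<Sum>k\<in>{..<q}-{k0}. F (if k = k0 then X else Y)) = (\<Sum>k\<in>{..<q}-{k0}. F Y)"
    by (rule sum.cong) auto
  also have "\<dots> = (q-1) * F Y" using assms by simp
  finally show ?thesis .
qed

lemma card_cmp_partition:
  "finite A \<Longrightarrow> card {x\<in>A. P x} + card {x\<in>A. \<not> P x} = card A"
proof -
  assume "finite A"
  then have "card ({x\<in>A. P x} \<union> {x\<in>A. \<not> P x}) = card {x\<in>A. P x} + card {x\<in>A. \<not> P x}"
    by (intro card_Un_disjoint) auto
  moreover have "{x\<in>A. P x} \<union> {x\<in>A. \<not> P x} = A" by auto
  ultimately show ?thesis by simp
qed

lemma one_off:
  fixes \<phi> :: "nat \<Rightarrow> real"
  assumes "card {k\<in>{..<q}. \<phi> k = u} \<ge> q - 1" "k1 < q" "\<phi> k1 \<noteq> u"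
  shows "\<exists>k0<q. \<forall>k<q. \<phi> k \<noteq> u \<longleftrightarrow> k = k0"
proof -
  have "card {k\<in>{..<q}. \<phi> k = u} + card {k\<in>{..<q}. \<phi> k \<noteq> u} = q"
    using card_cmp_partition[of "{..<q}" "\<lambda>k. \<phi> k = u"] by simp
  moreover have "card {k\<in>{..<q}. \<phi> k \<noteq> u} \<ge> 1"
    using assms(2,3) by (metis (mono_tags, lifting) One_nat_def Suc_leI card_gt_0_iff empty_iff
      finite_lessThan finite_subset lessThan_iff mem_Collect_eq subsetI)
  ultimately have "card {k\<in>{..<q}. \<phi> k \<noteq> u} = 1" using assms(1) by linarith
  then obtain k0 where k0: "{k\<in>{..<q}. \<phi> k \<noteq> u} = {k0}" by (meson card_1_singletonE)
  then have "k0 < q" by auto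
  moreover have "\<forall>k<q. \<phi> k \<noteq> u \<longleftrightarrow> k = k0" using k0 by (auto simp: set_eq_iff)
  ultimately show ?thesis by blast
qed


lemma sq_bound: "(q::nat) \<ge> 2 \<Longrightarrow> (q-1)*(q-1) = q*(q-2) + 1"
proof -
  assume "q \<ge> 2"
  then obtain r where "q = r + 2" by (metis add.commute le_Suc_ex)
  then show ?thesis by (simp add: algebra_simps)
qed

lemma two_d_mode:
  fixes \<phi> \<psi> :: "nat \<Rightarrow> real"
  assumes "\<phi> 0 = 0" "ka < q" "\<phi> ka \<noteq> 0" "q \<ge> 3"
    "(q-1)*(q-1)+1 \<le> (\<Sum>m<q. card {k\<in>{..<q}. c + \<phi> k + \<psi> m = 0})"
  shows "\<exists>u0. \<exists>k0<q. \<forall>k<q. \<phi> k \<noteq> u0 \<longleftrightarrow> k = k0"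
proof -
  obtain u0 where u0: "\<And>u. card {k\<in>{..<q}. \<phi> k = u} \<le> card {k\<in>{..<q}. \<phi> k = u0}"
    using mode_exists[of q \<phi>] assms by auto
  define M where "M = card {k\<in>{..<q}. \<phi> k = u0}"
  have "card {k\<in>{..<q}. c + \<phi> k + \<psi> m = 0} \<le> M" for m
  proof -
    have "{k\<in>{..<q}. c + \<phi> k + \<psi> m = 0} = {k\<in>{..<q}. \<phi> k = - c - \<psi> m}" by auto
    then show ?thesis using u0 unfolding M_def by simp
  qed
  then have "(\<Sum>m<q. card {k\<in>{..<q}. c + \<phi> k + \<psi> m = 0}) \<le> q * M"
    using sum_bounded_above[of "{..<q}" _ M] by simp
  then have T: "(q-1)*(q-1)+1 \<le> q * M" using assms(5) by linarith
  have "M \<ge> q - 1"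
  proof (rule ccontr)
    assume "\<not> M \<ge> q - 1"
    then have "M \<le> q - 2" by simp
    then have "q * M \<le> q * (q-2)" by (rule mult_le_mono2)
    then show False using T sq_bound[of q] assms(4) by linarith
  qed
  have "\<exists>k1<q. \<phi> k1 \<noteq> u0"
  proof (cases "u0 = 0")
    case True then show ?thesis using assms(2,3) by auto
  next
    case False then show ?thesis using assms(1,4) by (intro exI[of _ 0]) auto
  qed
  then obtain k1 where "k1 < q" "\<phi> k1 \<noteq> u0" by blast
  then show ?thesis using one_off[of q \<phi> u0 k1] \<open>M \<ge> q - 1\<close> unfolding M_def by blast
qed

lemma sum_swap_card:
  "(\<Sum>m<q. card {k\<in>{..<q}. P k m}) = (\<Sum>k<(q::nat). card {m\<in>{..<q}. P k m})"
proof -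
  have "(\<Sum>m<q. card {k\<in>{..<q}. P k m}) = (\<Sum>m<q. \<Sum>k<q. if P k m then 1 else 0)"
    by (intro sum.cong refl card_filter_sum) simp
  also have "\<dots> = (\<Sum>k<q. \<Sum>m<q. if P k m then 1 else 0)" by (rule sum.swap)
  also have "\<dots> = (\<Sum>k<q. card {m\<in>{..<q}. P k m})"
    by (intro sum.cong refl card_filter_sum[symmetric]) simp
  finally show ?thesis .
qed

lemma two_d:
  fixes \<phi> \<psi> :: "nat \<Rightarrow> real"
  assumes "q \<ge> 3" "\<phi> 0 = 0" "ka < q" "\<phi> ka \<noteq> 0" "\<psi> 0 = 0" "kb < q" "\<psi> kb \<noteq> 0"
    "(q-1)*(q-1)+1 \<le> (\<Sum>m<q. card {k\<in>{..<q}. c + \<phi> k + \<psi> m = 0})"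
  shows "\<exists>k0<q. \<exists>m0<q. \<exists>e. e \<noteq> 0 \<and>
    (\<forall>k<q. \<forall>m<q. c + \<phi> k + \<psi> m = (if k = k0 then e else 0) - (if m = m0 then e else 0))"
proof -
  obtain u0 k0 where k0: "k0 < q" "\<And>k. k < q \<Longrightarrow> \<phi> k \<noteq> u0 \<longleftrightarrow> k = k0"
    using two_d_mode[OF assms(2-4,1,8)] by blast
  have "(\<Sum>m<q. card {k\<in>{..<q}. c + \<phi> k + \<psi> m = 0}) = (\<Sum>k<q. card {m\<in>{..<q}. c + \<psi> m + \<phi> k = 0})"
    by (subst sum_swap_card) (simp add: ac_simps)
  then obtain w0 m0 where m0: "m0 < q" "\<And>m. m < q \<Longrightarrow> \<psi> m \<noteq> w0 \<longleftrightarrow> m = m0"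
    using two_d_mode[of \<psi> kb q c \<phi>] assms by auto
  define e where "e = \<phi> k0 - u0"
  define h where "h = \<psi> m0 - w0"
  define c' where "c' = c + u0 + w0"
  have e0: "e \<noteq> 0" using k0 unfolding e_def by auto
  have h0: "h \<noteq> 0" using m0 unfolding h_def by auto
  have rep: "c + \<phi> k + \<psi> m = c' + (if k = k0 then e else 0) + (if m = m0 then h else 0)"
    if "k < q" "m < q" for k m
  proof -
    have "\<phi> k = u0 + (if k = k0 then e else 0)" using k0(2)[OF that(1)] unfolding e_def by auto
    moreover have "\<psi> m = w0 + (if m = m0 then h else 0)" using m0(2)[OF that(2)] unfolding h_def by auto
    ultimately show ?thesis unfolding c'_def by simp
  qed
  define F where "F m v = (if c' + v + (if m = m0 then h else 0) = 0 then 1 else (0::nat))" for m v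
  define Gf where "Gf v = (if c' + e + v = 0 then 1 else (0::nat)) + (q-1) * (if c' + 0 + v = 0 then 1 else 0)" for v
  have "(\<Sum>m<q. card {k\<in>{..<q}. c + \<phi> k + \<psi> m = 0}) = (\<Sum>m<q. \<Sum>k<q. F m (if k = k0 then e else 0))"
  proof (rule sum.cong[OF refl])
    fix m assume "m \<in> {..<q}"
    then have eqs: "{k\<in>{..<q}. c + \<phi> k + \<psi> m = 0} = {k\<in>{..<q}. c' + (if k = k0 then e else 0) + (if m = m0 then h else 0) = 0}"
      using rep by auto
    have cf: "card {k\<in>{..<q}. c' + (if k = k0 then e else 0) + (if m = m0 then h else 0) = 0}
       = (\<Sum>k<q. if c' + (if k = k0 then e else 0) + (if m = m0 then h else 0) = 0 then 1 else 0)"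
      by (rule card_filter_sum) simp
    show "card {k\<in>{..<q}. c + \<phi> k + \<psi> m = 0} = (\<Sum>k<q. F m (if k = k0 then e else 0))"
      unfolding F_def by (simp only: eqs cf)
  qed
  also have "\<dots> = (\<Sum>m<q. F m e + (q-1) * F m 0)"
    by (intro sum.cong refl sum_if_point k0(1))
  also have "\<dots> = (\<Sum>m<q. Gf (if m = m0 then h else 0))"
    unfolding F_def Gf_def by (rule sum.cong) (auto simp: ac_simps)
  also have "\<dots> = Gf h + (q-1) * Gf 0" by (rule sum_if_point[OF m0(1)])
  finally have S: "(q-1)*(q-1)+1 \<le> Gf h + (q-1) * Gf 0" using assms(8) by simp
  define p where "p = q - 1"
  have p2: "p \<ge> 2" "2*p \<le> p*p" using assms(1) unfolding p_def by auto
  have c0: "c' = 0"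
  proof (rule ccontr)
    assume c: "c' \<noteq> 0"
    have "Gf h + p * Gf 0 \<le> 2 * p"
    proof (cases "c' + e = 0 \<and> c' + h = 0")
      case True
      then have "c' + e + h \<noteq> 0" using c by linarith
      then show ?thesis using True unfolding Gf_def p_def[symmetric] using c by simp
    next
      case False
      then show ?thesis unfolding Gf_def p_def[symmetric] using c p2 by auto
    qed
    then show False using S p2 unfolding p_def[symmetric] by linarith
  qed
  have "Gf 0 = p" unfolding Gf_def p_def using c0 e0 by simp
  moreover have "Gf h = (if e + h = 0 then 1 else 0)" unfolding Gf_def using c0 h0 by simp
  ultimately have "e + h = 0" using S unfolding p_def[symmetric] by (cases "e + h = 0") auto
  then have "h = - e" by simp
  show ?thesis
  proof (intro exI conjI allI impI)
    show "k0 < q" "m0 < q" "e \<noteq> 0" by fact+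
    fix k m assume "k < q" "m < q"
    then show "c + \<phi> k + \<psi> m = (if k = k0 then e else 0) - (if m = m0 then e else 0)"
      using rep[of k m] c0 \<open>h = -e\<close> by simp
  qed
qed


lemma hbox_lt: "x \<in> hbox q K \<Longrightarrow> l \<in> K \<Longrightarrow> x l < q"
  unfolding hbox_def by blast

theorem theorem2:
  fixes n q :: nat and f :: "(nat \<Rightarrow> nat) \<Rightarrow> real"
  assumes "q > 2" and "n > 1"
    and "additive n q f"
    and "card (supp n q f) \<le> 2 * (q - 1) * q ^ (n - 2)"
  shows "(\<forall>x\<in>hamming n q. f x = 0)
    \<or> (\<exists>i<n. \<exists>k<q. \<exists>c. c \<noteq> 0 \<and>
          (\<forall>x\<in>hamming n q. f x = (if x \<in> T q k i n then c else 0)))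
    \<or> (\<exists>i<n. \<exists>j<n. i \<noteq> j \<and> (\<exists>k<q. \<exists>m<q. \<exists>c. c \<noteq> 0 \<and>
          (\<forall>x\<in>hamming n q.
             f x = (if x \<in> T q k i n - T q m j n then c
                    else if x \<in> T q m j n - T q k i n then -c else 0))))"
proof -
  have q3: "q \<ge> 3" "q > 0" using assms(1) by auto
  obtain a where a0: "\<forall>l. a l 0 = 0" and fG: "\<forall>x\<in>hamming n q. f x = G a n (f (\<lambda>_. 0)) x"
    using decomp[OF assms(3) q3(2)] by blast
  define c where "c = f (\<lambda>_. 0)"
  define K where "K = {..<n}"
  have HK: "hamming n q = hbox q K" unfolding K_def by (rule hamming_box)
  have finK: "finite K" "card K = n" unfolding K_def by auto
  have KN: "K \<subseteq> {..<n}" unfolding K_def by simp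
  have fG': "f x = G a n c x" if "x \<in> hamming n q" for x using fG that unfolding c_def by blast
  define Z where "Z = card {x\<in>hbox q K. G a n c x = 0}"
  have "card {x\<in>hamming n q. f x = 0} + card {x\<in>hamming n q. \<not> f x = 0} = card (hamming n q)"
    by (rule card_cmp_partition) (simp add: HK finite_box finK)
  moreover have "{x\<in>hamming n q. f x = 0} = {x\<in>hbox q K. G a n c x = 0}" using fG' HK by auto
  moreover have "{x\<in>hamming n q. \<not> f x = 0} = supp n q f" unfolding supp_def by simp
  moreover have "card (hamming n q) = q^n" unfolding HK using finK by (simp add: card_box)
  ultimately have Zs: "Z + card (supp n q f) = q^n" unfolding Z_def by simp
  define p where "p = q - 1"
  define Q where "Q = q^(n-2)"
  have qp: "q = p + 1" unfolding p_def using q3 by simp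
  have Q1: "Q \<ge> 1" unfolding Q_def using q3 by simp
  have Q0: "0 < Q" using Q1 by simp
  have qn: "q^n = q * q * Q" unfolding Q_def
  proof -
    have "n = Suc (Suc (n-2))" using assms(2) by simp
    then have "q^n = q^(Suc (Suc (n-2)))" by simp
    then show "q^n = q * q * q^(n-2)" by (simp add: mult.assoc)
  qed
  have qq: "q * q = (p*p+1) + 2*p" unfolding qp by (simp add: algebra_simps)
  have ZT: "(p*p+1)*Q \<le> Z"
  proof -
    have "card (supp n q f) \<le> 2*p*Q" using assms(4) unfolding p_def Q_def .
    moreover have "q^n = (p*p+1)*Q + 2*p*Q" unfolding qn qq by (simp add: algebra_simps)
    ultimately show ?thesis using Zs by linarith
  qed
  have Tform: "((q-1)*(q-1)+1) * q^(card K - 2) = (p*p+1)*Q" unfolding p_def Q_def finK by simp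
  define I where "I = {l\<in>K. \<exists>k<q. a l k \<noteq> 0}"
  have finI: "finite I" and IK: "I \<subseteq> K" unfolding I_def using finK by auto
  have Ik: "\<exists>k<q. a l k \<noteq> 0" if "l \<in> I" for l using that unfolding I_def by blast
  have GI: "G a n c x = c + (\<Sum>l\<in>I. a l (x l))" if x: "x \<in> hbox q K" for x
  proof -
    have "(\<Sum>l\<in>{..<n}. a l (x l)) = (\<Sum>l\<in>I. a l (x l))"
    proof (rule sum.mono_neutral_right)
      show "finite {..<n}" by simp
      show "I \<subseteq> {..<n}" using IK KN by simp
      show "\<forall>l\<in>{..<n} - I. a l (x l) = 0"
      proof
        fix l assume l: "l \<in> {..<n} - I"
        then have "l \<in> K" unfolding K_def by simp
        then have "x l < q" using hbox_lt[OF x] by simp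
        then show "a l (x l) = 0" using l \<open>l \<in> K\<close> unfolding I_def by auto
      qed
    qed
    then show ?thesis unfolding G_def by simp
  qed
  consider "card I \<ge> 3" | "card I = 0" | "card I = 1" | "card I = 2" by linarith
  then show ?thesis
  proof cases
    case 1
    obtain i where i: "i \<in> I" using 1 by (metis card.empty ex_in_conv not_numeral_le_zero)
    have "card (I - {i}) \<ge> 2" using card_Diff_singleton[OF i] 1 by simp
    then obtain j where j: "j \<in> I - {i}" by (metis card.empty ex_in_conv not_numeral_le_zero)
    have "card (I - {i} - {j}) \<ge> 1" using card_Diff_singleton[OF j] \<open>card (I - {i}) \<ge> 2\<close> by simp
    then obtain l where l: "l \<in> I - {i} - {j}" by (metis card.empty ex_in_conv not_one_le_zero)
    obtain ka where ka: "ka < q" "a i ka \<noteq> 0" using Ik i by blast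
    obtain kb where kb: "kb < q" "a j kb \<noteq> 0" using Ik j by blast
    obtain kc where kc: "kc < q" "a l kc \<noteq> 0" using Ik l by blast
    have "Z < ((q-1)*(q-1)+1) * q^(card K - 2)"
      unfolding Z_def
      by (rule claimC[where i=i and j=j and l=l and ka=ka and kb=kb and kc=kc])
         (use finK KN IK i j l ka kb kc a0 q3 in auto)
    then show ?thesis using ZT Tform by linarith
  next
    case 2
    then have I0: "I = {}" using finI by simp
    have "c = 0"
    proof (rule ccontr)
      assume "c \<noteq> 0"
      then have E: "{x\<in>hbox q K. G a n c x = 0} = {}" using GI I0 by auto
      have "Z = 0" unfolding Z_def E by simp
      moreover have "(p*p+1)*Q \<ge> 1" using Q1 by simp
      ultimately show False using ZT by linarith
    qed
    then have "\<forall>x\<in>hamming n q. f x = 0" using fG' GI I0 HK by simp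
    then show ?thesis by blast
  next
    case 3
    then obtain i where I1: "I = {i}" by (meson card_1_singletonE)
    have iK: "i \<in> K" using I1 IK by simp
    obtain ka where ka: "ka < q" "a i ka \<noteq> 0" using Ik I1 by blast
    have Gi: "G a n c x = c + a i (x i)" if "x \<in> hbox q K" for x using GI[OF that] I1 by simp
    define N where "N = card {k\<in>{..<q}. c + a i k = 0}"
    have "Z = (\<Sum>y\<in>hbox q (K-{i}). card {k\<in>{..<q}. G a n c (y(i:=k)) = 0})"
      unfolding Z_def by (rule hbox_card_filter[OF finK(1) iK])
    also have "\<dots> = (\<Sum>y\<in>hbox q (K-{i}). N)"
    proof (rule sum.cong[OF refl])
      fix y assume y: "y \<in> hbox q (K-{i})"
      have "y(i:=k) \<in> hbox q K" if "k < q" for k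
        using hbox_image[OF iK, of q] y that by auto
      then have "{k\<in>{..<q}. G a n c (y(i:=k)) = 0} = {k\<in>{..<q}. c + a i k = 0}"
        using Gi by auto
      then show "card {k\<in>{..<q}. G a n c (y(i:=k)) = 0} = N" unfolding N_def by simp
    qed
    also have "\<dots> = q^(n-1) * N" using finK iK by (simp add: card_box)
    also have "q^(n-1) = q * Q"
    proof -
      have "n - 1 = Suc (n - 2)" using assms(2) by simp
      then show ?thesis unfolding Q_def by simp
    qed
    finally have "(p*p+1)*Q \<le> (q * N) * Q" using ZT by (simp add: algebra_simps)
    then have qN: "p*p+1 \<le> q * N" by (rule mult_right_le_imp_le) (rule Q0)
    have "N \<ge> q - 1"
    proof (rule ccontr)
      assume "\<not> N \<ge> q - 1"
      then have "N \<le> q - 2" by simp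
      then have "q * N \<le> q * (q-2)" by (rule mult_le_mono2)
      then show False using qN sq_bound[of q] q3 unfolding p_def by linarith
    qed
    have "\<exists>k1<q. c + a i k1 \<noteq> 0"
    proof (cases "c = 0")
      case True then show ?thesis using ka by auto
    next
      case False then show ?thesis using a0 q3 by (intro exI[of _ 0]) auto
    qed
    then obtain k1 where "k1 < q" "c + a i k1 \<noteq> 0" by blast
    then obtain k0 where k0: "k0 < q" "\<And>k. k < q \<Longrightarrow> c + a i k \<noteq> 0 \<longleftrightarrow> k = k0"
      using one_off[of q "\<lambda>k. c + a i k" 0 k1] \<open>N \<ge> q - 1\<close> unfolding N_def by blast
    have "\<forall>x\<in>hamming n q. f x = (if x \<in> T q k0 i n then c + a i k0 else 0)"
    proof
      fix x assume x: "x \<in> hamming n q"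
      have xi: "x i < q" using hbox_lt[of x q K i] x HK iK by simp
      have "f x = c + a i (x i)" using fG'[OF x] Gi x HK by simp
      moreover have "x \<in> T q k0 i n \<longleftrightarrow> x i = k0" using x unfolding T_def by simp
      ultimately show "f x = (if x \<in> T q k0 i n then c + a i k0 else 0)"
        using k0(2)[OF xi] by auto
    qed
    moreover have "c + a i k0 \<noteq> 0" using k0 by simp
    moreover have "i < n" using iK unfolding K_def by simp
    ultimately show ?thesis using k0(1) by blast
  next
    case 4
    then obtain i j where I2: "I = {i,j}" and ij: "i \<noteq> j" by (meson card_2_iff)
    have iK: "i \<in> K" and jK: "j \<in> K" using I2 IK by auto
    obtain ka where ka: "ka < q" "a i ka \<noteq> 0" using Ik I2 by blast
    obtain kb where kb: "kb < q" "a j kb \<noteq> 0" using Ik I2 by blast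
    have Gij: "G a n c x = c + a i (x i) + a j (x j)" if "x \<in> hbox q K" for x
      using GI[OF that] I2 ij by simp
    define S where "S = (\<Sum>m<q. card {k\<in>{..<q}. c + a i k + a j m = 0})"
    have "Z = (\<Sum>y\<in>hbox q (K-{i}). card {k\<in>{..<q}. G a n c (y(i:=k)) = 0})"
      unfolding Z_def by (rule hbox_card_filter[OF finK(1) iK])
    also have "\<dots> = (\<Sum>y\<in>hbox q (K-{i}). card {k\<in>{..<q}. c + a i k + a j (y j) = 0})"
    proof (rule sum.cong[OF refl])
      fix y assume y: "y \<in> hbox q (K-{i})"
      have "y(i:=k) \<in> hbox q K" if "k < q" for k
        using hbox_image[OF iK, of q] y that by auto
      then have "{k\<in>{..<q}. G a n c (y(i:=k)) = 0} = {k\<in>{..<q}. c + a i k + a j (y j) = 0}"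
        using Gij ij by auto
      then show "card {k\<in>{..<q}. G a n c (y(i:=k)) = 0} = card {k\<in>{..<q}. c + a i k + a j (y j) = 0}"
        by simp
    qed
    also have "\<dots> = (\<Sum>z\<in>hbox q (K-{i}-{j}). \<Sum>m<q. card {k\<in>{..<q}. c + a i k + a j ((z(j:=m)) j) = 0})"
      by (rule hbox_sum) (use finK jK ij in auto)
    also have "\<dots> = (\<Sum>z\<in>hbox q (K-{i}-{j}). S)" unfolding S_def by simp
    also have "\<dots> = q^(n-2) * S"
    proof -
      have "card (K-{i}-{j}) = n - 2" using finK iK jK ij by simp
      then show ?thesis using finK by (simp add: card_box)
    qed
    finally have "(p*p+1)*Q \<le> S * Q" using ZT unfolding Q_def by (simp add: algebra_simps)
    then have "p*p+1 \<le> S" by (rule mult_right_le_imp_le) (rule Q0)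
    then have "(q-1)*(q-1)+1 \<le> S" unfolding p_def .
    then obtain k0 m0 e where k0: "k0 < q" and m0: "m0 < q" and e: "e \<noteq> 0" and
      rep: "\<And>k m. k < q \<Longrightarrow> m < q \<Longrightarrow> c + a i k + a j m = (if k = k0 then e else 0) - (if m = m0 then e else 0)"
      using two_d[of q "a i" ka "a j" kb c] q3 a0 ka kb unfolding S_def by blast
    have "\<forall>x\<in>hamming n q.
             f x = (if x \<in> T q k0 i n - T q m0 j n then e
                    else if x \<in> T q m0 j n - T q k0 i n then -e else 0)"
    proof
      fix x assume x: "x \<in> hamming n q"
      have xi: "x i < q" using hbox_lt[of x q K i] x HK iK by simp
      have xj: "x j < q" using hbox_lt[of x q K j] x HK jK by simp
      have "f x = c + a i (x i) + a j (x j)" using fG'[OF x] Gij x HK by simp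
      also have "\<dots> = (if x i = k0 then e else 0) - (if x j = m0 then e else 0)" by (rule rep[OF xi xj])
      finally have fx: "f x = (if x i = k0 then e else 0) - (if x j = m0 then e else 0)" .
      have "x \<in> T q k0 i n \<longleftrightarrow> x i = k0" "x \<in> T q m0 j n \<longleftrightarrow> x j = m0" using x unfolding T_def by simp_all
      then show "f x = (if x \<in> T q k0 i n - T q m0 j n then e
                    else if x \<in> T q m0 j n - T q k0 i n then -e else 0)"
        using fx by auto
    qed
    moreover have "i < n" "j < n" using iK jK unfolding K_def by auto
    ultimately show ?thesis using ij k0 m0 e by blast
  qed
qed

end
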